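(* Let $E,F$ be Banach spaces, $a\in E$, $1\le p<\infty$, and $f:E\to F$. (i) If $F$ has type $q$ and $f$ is absolutely $(q;p)$-summing at $a$, then $f$ is almost $p$-summing at $a$. (ii) If $F$ has finite cotype $r$ and $f$ is almost $p$-summing at $a$, then $f$ is absolutely $(r;p)$-summing at $a$.
   Context: $(r_j)$ are the Rademacher functions. For a finite sequence $(x_j)_{j=1}^k$ in $E$, $\Vert(x_{j})_{j=1}^k\Vert_{w,p}:=\sup_{\varphi\in B_{E'}}(\sum_{j=1}^k|\varphi(x_{j})|^{p})^{1/p}$. $f$ is absolutely $(s;p)$-summing at $a$ if there exist $M_a,\delta_a,r_a>0$ with $\sum_{j=1}^{k}\Vert f(a+x_{j})-f(a)\Vert^{s}\leq M_{a}\Vert(x_{j})_{j=1}^{k}\Vert_{w,p}^{r_{a}}$ whenever $\Vert(x_{j})_{j=1}^{k}\Vert_{w,p}<\delta_{a}$. $f$ is almost $p$-summing at $a$ if there exist $C_a,\epsilon_a,r_a>0$ with $(\int_{0}^{1}\Vert\sum_{j=1}^{k}(f(a+x_{j})-f(a))r_{j}(t)\Vert^{2}dt)^{1/2}\leq C_{a}\Vert(x_{j})_{j=1}^{k}\Vert_{w,p}^{r_{a}}$ whenever $\Vert(x_{j})_{j=1}^{k}\Vert_{w,p}<\epsilon_{a}$ (for all $k$ and $x_1,\dots,x_k\in E$). *)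

theory Defs
  imports "HOL-Analysis.Analysis"
begin

definition rademacher :: "nat \<Rightarrow> real \<Rightarrow> real" where
  "rademacher j t = sgn (sin (2 ^ j * pi * t))"

definition rad_avg :: "nat \<Rightarrow> (nat \<Rightarrow> 'b::real_normed_vector) \<Rightarrow> real" where
  "rad_avg k y = sqrt (LINT t:{0..1}|lborel. (norm (\<Sum>j=1..k. rademacher j t *\<^sub>R y j)) ^ 2)"

definition weak_norm :: "real \<Rightarrow> nat \<Rightarrow> (nat \<Rightarrow> 'a::real_normed_vector) \<Rightarrow> real" where
  "weak_norm p k x = (SUP \<phi>\<in>{\<phi>::'a \<Rightarrow>\<^sub>L real. norm \<phi> \<le> 1}.
      (\<Sum>j=1..k. \<bar>blinfun_apply \<phi> (x j)\<bar> powr p) powr (1 / p))"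

definition has_type :: "'b::real_normed_vector itself \<Rightarrow> real \<Rightarrow> bool" where
  "has_type (_::'b itself) q \<longleftrightarrow> 1 \<le> q \<and> q \<le> 2 \<and>
     (\<exists>C. \<forall>k (y::nat \<Rightarrow> 'b).
        rad_avg k y \<le> C * (\<Sum>j=1..k. norm (y j) powr q) powr (1 / q))"

definition has_finite_cotype :: "'b::real_normed_vector itself \<Rightarrow> real \<Rightarrow> bool" where
  "has_finite_cotype (_::'b itself) r \<longleftrightarrow> 2 \<le> r \<and>
     (\<exists>C. \<forall>k (y::nat \<Rightarrow> 'b).
        (\<Sum>j=1..k. norm (y j) powr r) powr (1 / r) \<le> C * rad_avg k y)"

definition abs_summing_at ::
    "real \<Rightarrow> real \<Rightarrow> ('a::real_normed_vector \<Rightarrow> 'b::real_normed_vector) \<Rightarrow> 'a \<Rightarrow> bool" where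
  "abs_summing_at s p f a \<longleftrightarrow> (\<exists>M \<delta> ra. M > 0 \<and> \<delta> > 0 \<and> ra > 0 \<and>
     (\<forall>k (x::nat \<Rightarrow> 'a). weak_norm p k x < \<delta> \<longrightarrow>
        (\<Sum>j=1..k. norm (f (a + x j) - f a) powr s) \<le> M * weak_norm p k x powr ra))"

definition almost_summing_at ::
    "real \<Rightarrow> ('a::real_normed_vector \<Rightarrow> 'b::real_normed_vector) \<Rightarrow> 'a \<Rightarrow> bool" where
  "almost_summing_at p f a \<longleftrightarrow> (\<exists>C \<epsilon> ra. C > 0 \<and> \<epsilon> > 0 \<and> ra > 0 \<and>
     (\<forall>k (x::nat \<Rightarrow> 'a). weak_norm p k x < \<epsilon> \<longrightarrow>
        rad_avg k (\<lambda>j. f (a + x j) - f a) \<le> C * weak_norm p k x powr ra))"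

end

theory Submission
  imports Defs
begin

lemma rad_avg_nonneg: "0 \<le> rad_avg k y"
  unfolding rad_avg_def set_lebesgue_integral_def by (intro real_sqrt_ge_zero Bochner_Integration.integral_nonneg) (auto simp: indicator_def)

lemma part1:
  fixes f :: "'a::banach \<Rightarrow> 'b::banach"
  assumes "has_type TYPE('b) q" "abs_summing_at q p f a"
  shows "almost_summing_at p f a"
proof -
  from assms(1) obtain C where q1: "1 \<le> q" and C: "\<And>k (y::nat \<Rightarrow> 'b).
        rad_avg k y \<le> C * (\<Sum>j=1..k. norm (y j) powr q) powr (1 / q)"
    unfolding has_type_def by blast
  from assms(2) obtain M \<delta> ra where M: "M > 0" "\<delta> > 0" "ra > 0" and
    H: "\<And>k (x::nat \<Rightarrow> 'a). weak_norm p k x < \<delta> \<Longrightarrow>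
        (\<Sum>j=1..k. norm (f (a + x j) - f a) powr q) \<le> M * weak_norm p k x powr ra"
    unfolding abs_summing_at_def by blast
  define C1 where "C1 = max C 1"
  show ?thesis unfolding almost_summing_at_def
  proof (rule exI[of _ "C1 * M powr (1/q)"], rule exI[of _ \<delta>], rule exI[of _ "ra/q"], intro conjI allI impI)
    show "0 < C1 * M powr (1/q)" using M unfolding C1_def by simp
    show "0 < \<delta>" using M by simp
    show "0 < ra / q" using M q1 by simp
    fix k and x :: "nat \<Rightarrow> 'a"
    assume w: "weak_norm p k x < \<delta>"
    define S where "S = (\<Sum>j=1..k. norm (f (a + x j) - f a) powr q)"
    have S0: "0 \<le> S" unfolding S_def by (intro sum_nonneg) simp
    have "rad_avg k (\<lambda>j. f (a + x j) - f a) \<le> C * S powr (1/q)"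
      using C[where k=k and y="\<lambda>j. f (a + x j) - f a"] unfolding S_def by simp
    also have "\<dots> \<le> C1 * S powr (1/q)"
      unfolding C1_def by (intro mult_right_mono) auto
    also have "\<dots> \<le> C1 * (M * weak_norm p k x powr ra) powr (1/q)"
      using H[OF w] S0 q1 unfolding S_def[symmetric] C1_def
      by (intro mult_left_mono powr_mono2) auto
    also have "(M * weak_norm p k x powr ra) powr (1/q) = M powr (1/q) * weak_norm p k x powr (ra/q)"
      using M by (simp add: powr_mult powr_powr)
    finally show "rad_avg k (\<lambda>j. f (a + x j) - f a) \<le> C1 * M powr (1 / q) * weak_norm p k x powr (ra / q)"
      by (simp add: mult.assoc)
  qed
qed

lemma part2:
  fixes f :: "'a::banach \<Rightarrow> 'b::banach"
  assumes "has_finite_cotype TYPE('b) r" "almost_summing_at p f a"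
  shows "abs_summing_at r p f a"
proof -
  from assms(1) obtain C where r2: "2 \<le> r" and C: "\<And>k (y::nat \<Rightarrow> 'b).
        (\<Sum>j=1..k. norm (y j) powr r) powr (1 / r) \<le> C * rad_avg k y"
    unfolding has_finite_cotype_def by blast
  from assms(2) obtain D \<epsilon> ra where D: "D > 0" "\<epsilon> > 0" "ra > 0" and
    H: "\<And>k (x::nat \<Rightarrow> 'a). weak_norm p k x < \<epsilon> \<Longrightarrow>
        rad_avg k (\<lambda>j. f (a + x j) - f a) \<le> D * weak_norm p k x powr ra"
    unfolding almost_summing_at_def by blast
  define C1 where "C1 = max C 1"
  show ?thesis unfolding abs_summing_at_def
  proof (rule exI[of _ "(C1 * D) powr r"], rule exI[of _ \<epsilon>], rule exI[of _ "ra*r"], intro conjI allI impI)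
    show "0 < (C1 * D) powr r" using D unfolding C1_def by simp
    show "0 < \<epsilon>" using D by simp
    show "0 < ra * r" using D r2 by simp
    fix k and x :: "nat \<Rightarrow> 'a"
    assume w: "weak_norm p k x < \<epsilon>"
    define S where "S = (\<Sum>j=1..k. norm (f (a + x j) - f a) powr r)"
    have S0: "0 \<le> S" unfolding S_def by (intro sum_nonneg) simp
    have "S powr (1/r) \<le> C * rad_avg k (\<lambda>j. f (a + x j) - f a)"
      using C[where k=k and y="\<lambda>j. f (a + x j) - f a"] unfolding S_def by simp
    also have "\<dots> \<le> C1 * rad_avg k (\<lambda>j. f (a + x j) - f a)"
      unfolding C1_def by (intro mult_right_mono rad_avg_nonneg) auto
    also have "\<dots> \<le> C1 * (D * weak_norm p k x powr ra)"
      using H[OF w] unfolding C1_def by (intro mult_left_mono) auto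
    finally have le: "S powr (1/r) \<le> C1 * D * weak_norm p k x powr ra" by (simp add: mult.assoc)
    have "S = (S powr (1/r)) powr r" using S0 r2 by (simp add: powr_powr)
    also have "\<dots> \<le> (C1 * D * weak_norm p k x powr ra) powr r"
      using le r2 by (intro powr_mono2) auto
    also have "\<dots> = (C1 * D) powr r * weak_norm p k x powr (ra * r)"
      using D unfolding C1_def by (simp add: powr_mult powr_powr)
    finally show "S \<le> (C1 * D) powr r * weak_norm p k x powr (ra * r)" .
  qed
qed

theorem mainTheorem6:
  fixes f :: "'a::banach \<Rightarrow> 'b::banach" and a :: 'a and p q r :: real
  assumes "1 \<le> p"
  shows "(has_type TYPE('b) q \<and> abs_summing_at q p f a \<longrightarrow> almost_summing_at p f a)
       \<and> (has_finite_cotype TYPE('b) r \<and> almost_summing_at p f a \<longrightarrow> abs_summing_at r p f a)"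
  using part1 part2 by blast

end
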